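(* Let $V$ be a unitary lowest weight representation of $\hat{G}_{\Lambda,\Lambda_F}$ with lowest weight $h$. Then there exist $\alpha\in\mathbb{R}$ and $N\in\mathbb{N}$ such that $h_I(\lambda_1;I;\lambda_2)=\alpha$ for all $\lambda_1,\lambda_2\in\{1,\dots,\Lambda_F\}$ and all sequences $I$ with $\#(I)\ge N$.
   Context: Fix positive integers $\Lambda,\Lambda_F$. A sequence $\dot I=i_1\cdots i_a$ is a finite, possibly empty, sequence of integers in $\{1,\dots,\Lambda\}$; $\#(\dot I)=a$, juxtaposition denotes concatenation, and $\delta^{\dot I}_{\dot J}$ is $1$ if $\dot I=\dot J$ and $0$ otherwise (similarly for integers). Let $\mathcal{T}_o$ be the complex vector space with basis the symbols $\bar\phi^{\lambda_1}\otimes s^{\dot K}\otimes\phi^{\lambda_2}$, $1\le\lambda_1,\lambda_2\le\Lambda_F$, $\dot K$ any sequence. For all sequences $\dot I,\dot J$ and all $\lambda_i\in\{1,\dots,\Lambda_F\}$ define linear operators on $\mathcal{T}_o$: first kind: $\bar\Xi^{\lambda_1}_{\lambda_2}\otimes f^{\dot I}_{\dot J}\otimes\Xi^{\lambda_3}_{\lambda_4}(\bar\phi^{\lambda_5}\otimes s^{\dot K}\otimes\phi^{\lambda_6})=\delta^{\lambda_5}_{\lambda_2}\delta^{\dot K}_{\dot J}\delta^{\lambda_6}_{\lambda_4}\,\bar\phi^{\lambda_1}\otimes s^{\dot I}\otimes\phi^{\lambda_3}$; second kind: $\bar\Xi^{\lambda_1}_{\lambda_2}\otimes l^{\dot I}_{\dot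 J}(\bar\phi^{\lambda_3}\otimes s^{\dot K}\otimes\phi^{\lambda_4})=\delta^{\lambda_3}_{\lambda_2}\sum_{\dot K_1\dot K_2=\dot K}\delta^{\dot K_1}_{\dot J}\,\bar\phi^{\lambda_1}\otimes s^{\dot I\dot K_2}\otimes\phi^{\lambda_4}$; third kind: $r^{\dot I}_{\dot J}\otimes\Xi^{\lambda_1}_{\lambda_2}(\bar\phi^{\lambda_3}\otimes s^{\dot K}\otimes\phi^{\lambda_4})=\delta^{\lambda_4}_{\lambda_2}\sum_{\dot K_1\dot K_2=\dot K}\delta^{\dot K_2}_{\dot J}\,\bar\phi^{\lambda_3}\otimes s^{\dot K_1\dot I}\otimes\phi^{\lambda_1}$; fourth kind: $\sigma^{\dot I}_{\dot J}(\bar\phi^{\lambda_1}\otimes s^{\dot K}\otimes\phi^{\lambda_2})=\sum_{\dot K_1\dot K_2\dot K_3=\dot K}\delta^{\dot K_2}_{\dot J}\,\bar\phi^{\lambda_1}\otimes s^{\dot K_1\dot I\dot K_3}\otimes\phi^{\lambda_2}$; sums over all ways to write $\dot K$ as a concatenation of possibly empty sequences. The open string algebra $\hat{G}_{\Lambda,\Lambda_F}$ is the Lie algebra (commutator bracket) of operators on $\mathcal{T}_o$ spanned by these operators. Ordering: for finite sequences of positive integers $a=a_1\cdots a_m$, $b=b_1\cdots b_n$, $a>b$ means $m>n$, or $m=n\ne0$ and $a_r>b_r$ at the first index $r$ where they differ (applied to concatenations like $\dot I\lambda_1\lambda_3$). $G^{00}$ is the span of all $\bar\Xi^{\lambda_1}_{\lambda_1}\otimes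 f^{\dot I}_{\dot I}\otimes\Xi^{\lambda_2}_{\lambda_2}$, $\bar\Xi^{\lambda}_{\lambda}\otimes l^{\dot I}_{\dot I}$, $r^{\dot I}_{\dot I}\otimes\Xi^{\lambda}_{\lambda}$, $\sigma^{\dot I}_{\dot I}$. $G^-$ is the span of all operators of the four kinds with $\#(\dot I)<\#(\dot J)$, together with those with $\#(\dot I)=\#(\dot J)$ and $\dot J\lambda_2\lambda_4>\dot I\lambda_1\lambda_3$ (first kind), $\dot J\lambda_2>\dot I\lambda_1$ (second and third kind), $\dot J>\dot I$ (fourth kind). $\omega$ is the antilinear anti-involution swapping upper and lower indices: $\omega(\bar\Xi^{\lambda_1}_{\lambda_2}\otimes f^{\dot I}_{\dot J}\otimes\Xi^{\lambda_3}_{\lambda_4})=\bar\Xi^{\lambda_2}_{\lambda_1}\otimes f^{\dot J}_{\dot I}\otimes\Xi^{\lambda_4}_{\lambda_3}$, $\omega(\bar\Xi^{\lambda_1}_{\lambda_2}\otimes l^{\dot I}_{\dot J})=\bar\Xi^{\lambda_2}_{\lambda_1}\otimes l^{\dot J}_{\dot I}$, $\omega(r^{\dot I}_{\dot J}\otimes\Xi^{\lambda_1}_{\lambda_2})=r^{\dot J}_{\dot I}\otimes\Xi^{\lambda_2}_{\lambda_1}$, $\omega(\sigma^{\dot I}_{\dot J})=\sigma^{\dot J}_{\dot I}$. A lowest weight $h$ is a linear functional on $G^{00}$ real on the spanning operators; $h_I(\lambda_1;\dot I;\lambda_2)$ denotes its value on $\bar\Xi^{\lambda_1}_{\lambda_1}\otimes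 f^{\dot I}_{\dot I}\otimes\Xi^{\lambda_2}_{\lambda_2}$. A unitary lowest weight representation with lowest weight $h$ is a representation $V$ generated by a vector $v\ne0$ with $G^-v=0$ and $Hv=h(H)v$ for $H\in G^{00}$, carrying a positive definite Hermitian form with $\langle Xu,w\rangle=\langle u,\omega(X)w\rangle$ for all $X$. *)

theory Defs
  imports "HOL-Analysis.Analysis" "HOL-Library.Poly_Mapping"
begin

text \<open>A basis symbol  phibar^l1 (x) s^K (x) phi^l2  is encoded as the triple (l1, K, l2).
  T_o is modelled as finitely supported complex functions on all such triples;
  the generators act as zero on triples that are not valid basis symbols, so the
  operator algebra spanned is isomorphic to the one acting on T_o itself.\<close>

type_synonym basis = "nat \<times> nat list \<times> nat"
type_synonym tvec = "basis \<Rightarrow>\<^sub>0 complex"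
type_synonym top = "tvec \<Rightarrow> tvec"

definition tscale :: "complex \<Rightarrow> tvec \<Rightarrow> tvec" where
  "tscale c p = Poly_Mapping.map (\<lambda>x. c * x) p"

definition valid_seq :: "nat \<Rightarrow> nat list \<Rightarrow> bool" where
  "valid_seq Lam K \<longleftrightarrow> set K \<subseteq> {1..Lam}"

definition valid_basis :: "nat \<Rightarrow> nat \<Rightarrow> basis \<Rightarrow> bool" where
  "valid_basis Lam LamF b \<longleftrightarrow>
     (case b of (l1, K, l2) \<Rightarrow> l1 \<in> {1..LamF} \<and> l2 \<in> {1..LamF} \<and> valid_seq Lam K)"

text \<open>F l1 l2 I J l3 l4 = Xibar^l1_l2 (x) f^I_J (x) Xi^l3_l4;
  L l1 l2 I J = Xibar^l1_l2 (x) l^I_J;  R I J l1 l2 = r^I_J (x) Xi^l1_l2;  S I J = sigma^I_J.\<close>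

datatype gen =
    F nat nat "nat list" "nat list" nat nat
  | L nat nat "nat list" "nat list"
  | R "nat list" "nat list" nat nat
  | S "nat list" "nat list"

fun valid_gen :: "nat \<Rightarrow> nat \<Rightarrow> gen \<Rightarrow> bool" where
  "valid_gen Lam LamF (F l1 l2 I J l3 l4) \<longleftrightarrow>
     l1 \<in> {1..LamF} \<and> l2 \<in> {1..LamF} \<and> l3 \<in> {1..LamF} \<and> l4 \<in> {1..LamF}
     \<and> valid_seq Lam I \<and> valid_seq Lam J"
| "valid_gen Lam LamF (L l1 l2 I J) \<longleftrightarrow>
     l1 \<in> {1..LamF} \<and> l2 \<in> {1..LamF} \<and> valid_seq Lam I \<and> valid_seq Lam J"
| "valid_gen Lam LamF (R I J l1 l2) \<longleftrightarrow>
     l1 \<in> {1..LamF} \<and> l2 \<in> {1..LamF} \<and> valid_seq Lam I \<and> valid_seq Lam J"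
| "valid_gen Lam LamF (S I J) \<longleftrightarrow> valid_seq Lam I \<and> valid_seq Lam J"

fun gen_act_basis :: "gen \<Rightarrow> basis \<Rightarrow> tvec" where
  "gen_act_basis (F l1 l2 I J l3 l4) (l5, K, l6) =
     (if l5 = l2 \<and> K = J \<and> l6 = l4 then Poly_Mapping.single (l1, I, l3) 1 else 0)"
| "gen_act_basis (L l1 l2 I J) (l3, K, l4) =
     (if l3 = l2 then
        (\<Sum>n\<in>{0..length K}. if take n K = J
             then Poly_Mapping.single (l1, I @ drop n K, l4) 1 else 0)
      else 0)"
| "gen_act_basis (R I J l1 l2) (l3, K, l4) =
     (if l4 = l2 then
        (\<Sum>n\<in>{0..length K}. if drop n K = J
             then Poly_Mapping.single (l3, take n K @ I, l1) 1 else 0)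
      else 0)"
| "gen_act_basis (S I J) (l1, K, l2) =
     (\<Sum>(i, j)\<in>{(i, j). i \<le> j \<and> j \<le> length K}.
        if take (j - i) (drop i K) = J
        then Poly_Mapping.single (l1, take i K @ I @ drop j K, l2) 1 else 0)"

definition gen_op :: "nat \<Rightarrow> nat \<Rightarrow> gen \<Rightarrow> top" where
  "gen_op Lam LamF g t =
     (\<Sum>b\<in>Poly_Mapping.keys t. if valid_basis Lam LamF b
                    then tscale (Poly_Mapping.lookup t b) (gen_act_basis g b) else 0)"

definition open_string_algebra :: "nat \<Rightarrow> nat \<Rightarrow> top set" where
  "open_string_algebra Lam LamF =
     {X. \<exists>A c. finite A \<and> (\<forall>g\<in>A. valid_gen Lam LamF g) \<and>
            X = (\<lambda>t. \<Sum>g\<in>A. tscale (c g) (gen_op Lam LamF g t))}"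

definition op_add :: "top \<Rightarrow> top \<Rightarrow> top" where
  "op_add X Y = (\<lambda>t. X t + Y t)"

definition op_scale :: "complex \<Rightarrow> top \<Rightarrow> top" where
  "op_scale c X = (\<lambda>t. tscale c (X t))"

definition op_bracket :: "top \<Rightarrow> top \<Rightarrow> top" where
  "op_bracket X Y = (\<lambda>t. X (Y t) - Y (X t))"

definition seq_gt :: "nat list \<Rightarrow> nat list \<Rightarrow> bool" where
  "seq_gt a b \<longleftrightarrow> length a > length b \<or>
     (length a = length b \<and> a \<noteq> [] \<and>
      (\<exists>r < length a. take r a = take r b \<and> a ! r > b ! r))"

fun in_G00 :: "gen \<Rightarrow> bool" where
  "in_G00 (F l1 l2 I J l3 l4) \<longleftrightarrow> l1 = l2 \<and> I = J \<and> l3 = l4"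
| "in_G00 (L l1 l2 I J) \<longleftrightarrow> l1 = l2 \<and> I = J"
| "in_G00 (R I J l1 l2) \<longleftrightarrow> I = J \<and> l1 = l2"
| "in_G00 (S I J) \<longleftrightarrow> I = J"

fun in_Gminus :: "gen \<Rightarrow> bool" where
  "in_Gminus (F l1 l2 I J l3 l4) \<longleftrightarrow> length I < length J \<or>
      (length I = length J \<and> seq_gt (J @ [l2, l4]) (I @ [l1, l3]))"
| "in_Gminus (L l1 l2 I J) \<longleftrightarrow> length I < length J \<or>
      (length I = length J \<and> seq_gt (J @ [l2]) (I @ [l1]))"
| "in_Gminus (R I J l1 l2) \<longleftrightarrow> length I < length J \<or>
      (length I = length J \<and> seq_gt (J @ [l2]) (I @ [l1]))"
| "in_Gminus (S I J) \<longleftrightarrow> length I < length J \<or>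
      (length I = length J \<and> seq_gt J I)"

fun omega :: "gen \<Rightarrow> gen" where
  "omega (F l1 l2 I J l3 l4) = F l2 l1 J I l4 l3"
| "omega (L l1 l2 I J) = L l2 l1 J I"
| "omega (R I J l1 l2) = R J I l2 l1"
| "omega (S I J) = S J I"

text \<open>V is the carrier type 'v with complex scalar multiplication smul;
  rho maps operators of the algebra to maps on V; B is the Hermitian form
  (linear in the first, conjugate-linear in the second argument);
  h gives the lowest weight on the spanning operators of G^00.\<close>

definition is_representation ::
  "nat \<Rightarrow> nat \<Rightarrow> (complex \<Rightarrow> 'v::ab_group_add \<Rightarrow> 'v) \<Rightarrow> (top \<Rightarrow> 'v \<Rightarrow> 'v) \<Rightarrow> bool" where
  "is_representation Lam LamF smul rho \<longleftrightarrow>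
     vector_space smul \<and>
     (\<forall>X\<in>open_string_algebra Lam LamF. Vector_Spaces.linear smul smul (rho X)) \<and>
     (\<forall>X\<in>open_string_algebra Lam LamF. \<forall>Y\<in>open_string_algebra Lam LamF. \<forall>a b u.
        rho (op_add (op_scale a X) (op_scale b Y)) u = smul a (rho X u) + smul b (rho Y u)) \<and>
     (\<forall>X\<in>open_string_algebra Lam LamF. \<forall>Y\<in>open_string_algebra Lam LamF. \<forall>u.
        rho (op_bracket X Y) u = rho X (rho Y u) - rho Y (rho X u))"

definition pos_def_hermitian ::
  "(complex \<Rightarrow> 'v::ab_group_add \<Rightarrow> 'v) \<Rightarrow> ('v \<Rightarrow> 'v \<Rightarrow> complex) \<Rightarrow> bool" where
  "pos_def_hermitian smul B \<longleftrightarrow>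
     (\<forall>a u u' w. B (smul a u + u') w = a * B u w + B u' w) \<and>
     (\<forall>u w. B u w = cnj (B w u)) \<and>
     (\<forall>u. u \<noteq> 0 \<longrightarrow> Re (B u u) > 0)"

definition unitary_lowest_weight_rep ::
  "nat \<Rightarrow> nat \<Rightarrow> (complex \<Rightarrow> 'v::ab_group_add \<Rightarrow> 'v) \<Rightarrow> (top \<Rightarrow> 'v \<Rightarrow> 'v)
   \<Rightarrow> ('v \<Rightarrow> 'v \<Rightarrow> complex) \<Rightarrow> (gen \<Rightarrow> real) \<Rightarrow> bool" where
  "unitary_lowest_weight_rep Lam LamF smul rho B h \<longleftrightarrow>
     is_representation Lam LamF smul rho \<and>
     (\<exists>v. v \<noteq> 0 \<and>
        (\<forall>S. module.subspace smul S \<and> v \<in> S \<and>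
             (\<forall>X\<in>open_string_algebra Lam LamF. \<forall>u\<in>S. rho X u \<in> S) \<longrightarrow> S = UNIV) \<and>
        (\<forall>g. valid_gen Lam LamF g \<and> in_Gminus g \<longrightarrow> rho (gen_op Lam LamF g) v = 0) \<and>
        (\<forall>g. valid_gen Lam LamF g \<and> in_G00 g \<longrightarrow>
              rho (gen_op Lam LamF g) v = smul (complex_of_real (h g)) v)) \<and>
     pos_def_hermitian smul B \<and>
     (\<forall>g u w. valid_gen Lam LamF g \<longrightarrow>
        B (rho (gen_op Lam LamF g) u) w = B u (rho (gen_op Lam LamF (omega g)) w))"

end

theory Submission
  imports Defs
begin



lemma lookup_tscale[simp]: "Poly_Mapping.lookup (tscale c p) k = c * Poly_Mapping.lookup p k"
  unfolding tscale_def by transfer (simp add: when_def)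

lemma tscale_1[simp]: "tscale 1 p = p"
  by (rule poly_mapping_eqI) simp
lemma tscale_0[simp]: "tscale 0 p = 0"
  by (rule poly_mapping_eqI) simp
lemma tscale_zero[simp]: "tscale c 0 = 0"
  by (rule poly_mapping_eqI) simp
lemma tscale_m1[simp]: "tscale (-1) p = - p"
  by (rule poly_mapping_eqI) simp
lemma tscale_add: "tscale c (p + q) = tscale c p + tscale c q"
  by (rule poly_mapping_eqI) (simp add: lookup_add algebra_simps)

definition extl :: "(basis \<Rightarrow> tvec) \<Rightarrow> tvec \<Rightarrow> tvec" where
  "extl \<phi> t = (\<Sum>b\<in>Poly_Mapping.keys t. tscale (Poly_Mapping.lookup t b) (\<phi> b))"

lemma lookup_ext: "Poly_Mapping.lookup (extl \<phi> t) k = (\<Sum>b\<in>Poly_Mapping.keys t. Poly_Mapping.lookup t b * Poly_Mapping.lookup (\<phi> b) k)"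
  unfolding extl_def by (simp add: lookup_sum)

lemma lookup_ext_super: assumes "finite Sx" "Poly_Mapping.keys t \<subseteq> Sx"
  shows "Poly_Mapping.lookup (extl \<phi> t) k = (\<Sum>b\<in>Sx. Poly_Mapping.lookup t b * Poly_Mapping.lookup (\<phi> b) k)"
  unfolding lookup_ext
  by (rule sum.mono_neutral_left) (use assms in \<open>auto simp: in_keys_iff\<close>)

lemma ext_add: "extl \<phi> (p + q) = extl \<phi> p + extl \<phi> q"
proof (rule poly_mapping_eqI)
  fix k
  let ?Sx = "Poly_Mapping.keys p \<union> Poly_Mapping.keys q"
  have "Poly_Mapping.keys (p+q) \<subseteq> ?Sx" by (rule keys_add)
  then show "Poly_Mapping.lookup (extl \<phi> (p + q)) k = Poly_Mapping.lookup (extl \<phi> p + extl \<phi> q) k"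
    by (simp add: lookup_add lookup_ext_super[of ?Sx] sum.distrib algebra_simps)
qed

lemma ext_tscale: "extl \<phi> (tscale c p) = tscale c (extl \<phi> p)"
proof (rule poly_mapping_eqI)
  fix k
  have "Poly_Mapping.keys (tscale c p) \<subseteq> Poly_Mapping.keys p" by (auto simp: in_keys_iff)
  then show "Poly_Mapping.lookup (extl \<phi> (tscale c p)) k = Poly_Mapping.lookup (tscale c (extl \<phi> p)) k"
    by (simp add: lookup_ext_super[of "Poly_Mapping.keys p"] sum_distrib_left algebra_simps)
qed

lemma ext_zero[simp]: "extl \<phi> 0 = 0"
  unfolding extl_def by simp

lemma ext_single[simp]: "extl \<phi> (Poly_Mapping.single b 1) = \<phi> b"
  by (rule poly_mapping_eqI) (simp add: lookup_ext_super[of "{b}"])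

lemma ext_if: "extl \<phi> (if P then Poly_Mapping.single b 1 else 0) = (if P then \<phi> b else 0)"
  by simp

lemma ext_sum: "finite A \<Longrightarrow> extl \<phi> (\<Sum>a\<in>A. f a) = (\<Sum>a\<in>A. extl \<phi> (f a))"
  by (induction A rule: finite_induct) (simp_all add: ext_add)

lemma ext_comp: "extl \<psi> (extl \<phi> t) = extl (\<lambda>b. extl \<psi> (\<phi> b)) t"
  unfolding extl_def[of \<phi>]
  by (simp add: ext_sum ext_tscale) (simp add: extl_def)

lemma ext_diff: "extl \<phi> t - extl \<psi> t = extl (\<lambda>b. \<phi> b - \<psi> b) t"
  by (rule poly_mapping_eqI) (simp add: lookup_minus lookup_ext sum_subtractf algebra_simps)

lemma ext_plus: "extl \<phi> t + extl \<psi> t = extl (\<lambda>b. \<phi> b + \<psi> b) t"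
  by (rule poly_mapping_eqI) (simp add: lookup_add lookup_ext sum.distrib algebra_simps)

lemma ext_scale2: "tscale c (extl \<phi> t) = extl (\<lambda>b. tscale c (\<phi> b)) t"
  by (rule poly_mapping_eqI) (simp add: lookup_ext sum_distrib_left algebra_simps)

lemma ext_sumf: "finite A \<Longrightarrow> (\<Sum>a\<in>A. extl (\<phi> a) t) = extl (\<lambda>b. \<Sum>a\<in>A. \<phi> a b) t"
  by (induction A rule: finite_induct) (simp_all add: ext_plus, simp add: extl_def)

definition act' :: "nat \<Rightarrow> nat \<Rightarrow> gen \<Rightarrow> basis \<Rightarrow> tvec" where
  "act' Lam LamF g b = (if valid_basis Lam LamF b then gen_act_basis g b else 0)"

lemma gen_op_ext: "gen_op Lam LamF g = extl (act' Lam LamF g)"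
  unfolding gen_op_def extl_def act'_def
  by (intro ext sum.cong) auto




lemma sum_take: "(\<Sum>n\<in>{0..length K}. if take n K = J then f n else 0) =
   (if take (length J) K = J then f (length J) else (0::'a::comm_monoid_add))"
proof -
  have "(\<Sum>n\<in>{0..length K}. if take n K = J then f n else 0) =
     (\<Sum>n\<in>{0..length K}. if n = length J then (if take (length J) K = J then f n else 0) else 0)"
    by (rule sum.cong) auto
  also have "\<dots> = (if take (length J) K = J then f (length J) else 0)"
    by (auto simp: sum.delta dest: arg_cong[of _ _ length])
  finally show ?thesis .
qed

lemma act_F: assumes "valid_gen Lam LamF (F a1 b1 I J a3 b3)"
  shows "act' Lam LamF (F a1 b1 I J a3 b3) b =
     (if b = (b1,J,b3) then Poly_Mapping.single (a1,I,a3) 1 else 0)"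
  using assms by (cases b) (auto simp: act'_def valid_basis_def)

lemma act_L: assumes "valid_gen Lam LamF (L l1 l2 I J)"
  shows "act' Lam LamF (L l1 l2 I J) (l3,K,l4) =
     (if valid_basis Lam LamF (l3,K,l4) \<and> l3 = l2 \<and> take (length J) K = J
      then Poly_Mapping.single (l1, I @ drop (length J) K, l4) 1 else 0)"
  by (simp add: act'_def sum_take)

lemma bracket_eq:
  assumes "\<And>b. extl (act' Lam LamF g1) (act' Lam LamF g2 b) - extl (act' Lam LamF g2) (act' Lam LamF g1 b)
      = tscale a (act' Lam LamF k1 b) + tscale c (act' Lam LamF k2 b)"
  shows "op_bracket (gen_op Lam LamF g1) (gen_op Lam LamF g2) =
         op_add (op_scale a (gen_op Lam LamF k1)) (op_scale c (gen_op Lam LamF k2))"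
  unfolding op_bracket_def op_add_def op_scale_def gen_op_ext
  by (simp add: ext_comp ext_diff ext_scale2 ext_plus assms)

lemma valid_basis_simp[simp]: "valid_basis Lam LamF (l1,K,l2) \<longleftrightarrow> l1 \<in> {1..LamF} \<and> l2 \<in> {1..LamF} \<and> valid_seq Lam K"
  by (simp add: valid_basis_def)

lemma F_I1:
  assumes "valid_gen Lam LamF (F a1 b1 I J a3 b3)" "(a1,I,a3) \<noteq> (b1,J,b3)"
  shows "op_bracket (gen_op Lam LamF (F a1 b1 I J a3 b3)) (gen_op Lam LamF (F b1 a1 J I b3 a3)) =
     op_add (op_scale 1 (gen_op Lam LamF (F a1 a1 I I a3 a3))) (op_scale (-1) (gen_op Lam LamF (F b1 b1 J J b3 b3)))"
  apply (rule bracket_eq)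
  using assms by (simp add: act_F)

lemma F_I2:
  assumes "valid_gen Lam LamF (F a1 b1 I J a3 b3)" "(a1,I,a3) \<noteq> (b1,J,b3)"
  shows "op_bracket (gen_op Lam LamF (F a1 a1 I I a3 a3)) (gen_op Lam LamF (F b1 a1 J I b3 a3)) =
     op_add (op_scale (-1) (gen_op Lam LamF (F b1 a1 J I b3 a3))) (op_scale 0 (gen_op Lam LamF (F b1 a1 J I b3 a3)))"
  apply (rule bracket_eq)
  using assms by (auto simp: act_F)

lemma F_I3:
  assumes "valid_gen Lam LamF (F a1 b1 I J a3 b3)" "(a1,I,a3) \<noteq> (b1,J,b3)"
  shows "op_bracket (gen_op Lam LamF (F b1 b1 J J b3 b3)) (gen_op Lam LamF (F b1 a1 J I b3 a3)) =
     op_add (op_scale 1 (gen_op Lam LamF (F b1 a1 J I b3 a3))) (op_scale 0 (gen_op Lam LamF (F b1 a1 J I b3 a3)))"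
  apply (rule bracket_eq)
  using assms by (auto simp: act_F)

lemma L_I4:
  assumes "l \<in> {1..LamF}" "valid_seq Lam I" "i \<in> {1..Lam}"
  shows "op_bracket (gen_op Lam LamF (L l l I (I@[i]))) (gen_op Lam LamF (L l l (I@[i]) I)) =
     op_add (op_scale 1 (gen_op Lam LamF (L l l I I))) (op_scale (-1) (gen_op Lam LamF (L l l (I@[i]) (I@[i]))))"
proof (rule bracket_eq)
  fix b :: basis
  obtain l3 K l4 where b: "b = (l3,K,l4)" by (cases b) auto
  have vi: "valid_seq Lam (I@[i])" using assms by (auto simp: valid_seq_def)
  show "extl (act' Lam LamF (L l l I (I@[i]))) (act' Lam LamF (L l l (I@[i]) I) b) -
        extl (act' Lam LamF (L l l (I@[i]) I)) (act' Lam LamF (L l l I (I@[i])) b) =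
        tscale 1 (act' Lam LamF (L l l I I) b) + tscale (-1) (act' Lam LamF (L l l (I@[i]) (I@[i])) b)"
  proof -
    have A: "extl (act' Lam LamF (L l l I (I@[i]))) (act' Lam LamF (L l l (I@[i]) I) b) = act' Lam LamF (L l l I I) b"
    proof (cases "valid_basis Lam LamF (l3,K,l4) \<and> l3 = l \<and> take (length I) K = I")
      case True
      then have K: "K = I @ drop (length I) K" by (metis append_take_drop_id)
      have "valid_seq Lam (drop (length I) K)" using True by (auto simp: valid_seq_def dest: in_set_dropD)
      then have "valid_seq Lam (I @ [i] @ drop (length I) K)" using vi by (auto simp: valid_seq_def)
      then show ?thesis using True assms vi b by (simp add: act_L)
    next
      case False
      then show ?thesis using assms vi b by (auto simp: act_L)
    qed
    have Bq: "extl (act' Lam LamF (L l l (I@[i]) I)) (act' Lam LamF (L l l I (I@[i])) b) = act' Lam LamF (L l l (I@[i]) (I@[i])) b"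
    proof (cases "valid_basis Lam LamF (l3,K,l4) \<and> l3 = l \<and> take (length I + 1) K = I @ [i]")
      case True
      have "valid_seq Lam (drop (Suc (length I)) K)" using True by (auto simp: valid_seq_def dest: in_set_dropD)
      then have "valid_seq Lam (I @ drop (Suc (length I)) K)" using assms by (auto simp: valid_seq_def)
      then show ?thesis using True assms vi b by (simp add: act_L)
    next
      case False
      then show ?thesis using assms vi b by (auto simp: act_L)
    qed
    show ?thesis using A Bq by simp
  qed
qed




lemma L_rel_act:
  assumes l: "l \<in> {1..LamF}" and I: "valid_seq Lam I"
  shows "act' Lam LamF (L l l I I) b =
     (\<Sum>\<mu>\<in>{1..LamF}. act' Lam LamF (F l l I I \<mu> \<mu>) b) +
     (\<Sum>i\<in>{1..Lam}. act' Lam LamF (L l l (I@[i]) (I@[i])) b)"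
proof -
  obtain l3 K l4 where b: "b = (l3,K,l4)" by (cases b) auto
  have vF: "\<And>\<mu>. \<mu> \<in> {1..LamF} \<Longrightarrow> valid_gen Lam LamF (F l l I I \<mu> \<mu>)" using l I by auto
  have vL: "\<And>i. i \<in> {1..Lam} \<Longrightarrow> valid_gen Lam LamF (L l l (I@[i]) (I@[i]))" using l I by (auto simp: valid_seq_def)
  have Fs: "(\<Sum>\<mu>\<in>{1..LamF}. act' Lam LamF (F l l I I \<mu> \<mu>) b) =
      (\<Sum>\<mu>\<in>{1..LamF}. if \<mu> = l4 \<and> b = (l,I,l4) then Poly_Mapping.single (l,I,l4) 1 else 0)"
    by (rule sum.cong) (auto simp: act_F[OF vF] b)
  also have "\<dots> = (if l4 \<in> {1..LamF} \<and> b = (l,I,l4) then Poly_Mapping.single (l,I,l4) 1 else 0)"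
    by (cases "b = (l,I,l4)") (simp_all add: sum.delta)
  finally have Fs': "(\<Sum>\<mu>\<in>{1..LamF}. act' Lam LamF (F l l I I \<mu> \<mu>) b) =
     (if l4 \<in> {1..LamF} \<and> b = (l,I,l4) then Poly_Mapping.single (l,I,l4) 1 else 0)" .
  have Ls: "(\<Sum>i\<in>{1..Lam}. act' Lam LamF (L l l (I@[i]) (I@[i])) b) =
     (\<Sum>i\<in>{1..Lam}. if valid_basis Lam LamF (l3,K,l4) \<and> l3 = l \<and> take (Suc (length I)) K = I@[i]
      then Poly_Mapping.single (l, K, l4) 1 else 0)"
  proof (rule sum.cong)
    fix i assume i: "i \<in> {1..Lam}"
    have e: "take (Suc (length I)) K = I@[i] \<Longrightarrow> (I @ [i]) @ drop (Suc (length I)) K = K"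
      by (metis append_take_drop_id)
    show "act' Lam LamF (L l l (I@[i]) (I@[i])) b = (if valid_basis Lam LamF (l3,K,l4) \<and> l3 = l \<and> take (Suc (length I)) K = I@[i]
      then Poly_Mapping.single (l, K, l4) 1 else 0)"
      using act_L[OF vL[OF i], of l3 K l4] b e by simp
  qed simp
  show ?thesis
  proof (cases "valid_basis Lam LamF (l3,K,l4) \<and> l3 = l \<and> take (length I) K = I")
    case False
    have "take (Suc (length I)) K \<noteq> I@[i]" if "take (length I) K \<noteq> I" for i
    proof
      assume "take (Suc (length I)) K = I@[i]"
      then have "take (length I) (take (Suc (length I)) K) = I" by simp
      then show False using that by simp
    qed
    then have "(\<Sum>i\<in>{1..Lam}. act' Lam LamF (L l l (I@[i]) (I@[i])) b) = 0"
      using False unfolding Ls by (intro sum.neutral) auto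
    moreover have "(\<Sum>\<mu>\<in>{1..LamF}. act' Lam LamF (F l l I I \<mu> \<mu>) b) = 0"
      unfolding Fs' using False b l I by auto
    moreover have "act' Lam LamF (L l l I I) b = 0" using act_L[of Lam LamF l l I I l3 K l4] False b l I by auto
    ultimately show ?thesis by simp
  next
    case True
    then obtain rest where K: "K = I @ rest" by (metis append_take_drop_id)
    have LHS: "act' Lam LamF (L l l I I) b = Poly_Mapping.single (l, K, l4) 1"
      using act_L[of Lam LamF l l I I l3 K l4] True b l I K by auto
    show ?thesis
    proof (cases rest)
      case Nil
      have "(\<Sum>i\<in>{1..Lam}. act' Lam LamF (L l l (I@[i]) (I@[i])) b) = 0"
        unfolding Ls using K Nil by (intro sum.neutral) auto
      then show ?thesis unfolding Fs' LHS using True b K Nil by auto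
    next
      case (Cons r rs)
      have r: "r \<in> {1..Lam}" using True K Cons by (auto simp: valid_seq_def)
      have "(\<Sum>i\<in>{1..Lam}. act' Lam LamF (L l l (I@[i]) (I@[i])) b) =
            (\<Sum>i\<in>{1..Lam}. if i = r then Poly_Mapping.single (l, K, l4) 1 else 0)"
        unfolding Ls using K Cons True by (intro sum.cong) auto
      also have "\<dots> = Poly_Mapping.single (l, K, l4) 1" using r by simp
      finally show ?thesis unfolding Fs' LHS using b K Cons by simp
    qed
  qed
qed




lemma omega_omega[simp]: "omega (omega g) = g" by (cases g) auto
lemma valid_omega[simp]: "valid_gen Lam LamF (omega g) = valid_gen Lam LamF g" by (cases g) auto

lemma gen_in_alg: "valid_gen Lam LamF g \<Longrightarrow> gen_op Lam LamF g \<in> open_string_algebra Lam LamF"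
  unfolding open_string_algebra_def
  by (rule CollectI, rule exI[of _ "{g}"], rule exI[of _ "\<lambda>_. 1"]) auto

lemma sum_in_alg: "finite A \<Longrightarrow> \<forall>g\<in>A. valid_gen Lam LamF g \<Longrightarrow>
   (\<lambda>t. \<Sum>g\<in>A. gen_op Lam LamF g t) \<in> open_string_algebra Lam LamF"
  unfolding open_string_algebra_def
  by (rule CollectI, rule exI[of _ "A"], rule exI[of _ "\<lambda>_. 1"]) auto

locale ulw =
  fixes Lam LamF :: nat and smul :: "complex \<Rightarrow> 'v::ab_group_add \<Rightarrow> 'v"
    and rho :: "top \<Rightarrow> 'v \<Rightarrow> 'v" and B :: "'v \<Rightarrow> 'v \<Rightarrow> complex" and h :: "gen \<Rightarrow> real" and v :: 'v
  assumes rep: "is_representation Lam LamF smul rho"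
  and vnz: "v \<noteq> 0"
  and vminus: "\<And>g. valid_gen Lam LamF g \<Longrightarrow> in_Gminus g \<Longrightarrow> rho (gen_op Lam LamF g) v = 0"
  and vzero: "\<And>g. valid_gen Lam LamF g \<Longrightarrow> in_G00 g \<Longrightarrow> rho (gen_op Lam LamF g) v = smul (complex_of_real (h g)) v"
  and herm: "pos_def_hermitian smul B"
  and unit: "\<And>g u w. valid_gen Lam LamF g \<Longrightarrow> B (rho (gen_op Lam LamF g) u) w = B u (rho (gen_op Lam LamF (omega g)) w)"
begin

lemma vs: "vector_space smul" using rep by (simp add: is_representation_def)

sublocale vs: vector_space smul by (rule vs)

abbreviation r where "r g \<equiv> rho (gen_op Lam LamF g)"

lemma lin: "valid_gen Lam LamF g \<Longrightarrow> module_hom smul smul (r g)"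
  using rep gen_in_alg[of Lam LamF g] by (simp add: is_representation_def module_hom_iff_linear)

lemma r_add: "valid_gen Lam LamF g \<Longrightarrow> r g (x + y) = r g x + r g y"
  using lin module_hom.add by blast
lemma r_scale: "valid_gen Lam LamF g \<Longrightarrow> r g (smul c x) = smul c (r g x)"
  using lin module_hom.scale by blast
lemma r_zero: "valid_gen Lam LamF g \<Longrightarrow> r g 0 = 0"
  using lin module_hom.zero by blast
lemma r_diff: "valid_gen Lam LamF g \<Longrightarrow> r g (x - y) = r g x - r g y"
  using lin module_hom.diff by blast

lemma comm:
  assumes "valid_gen Lam LamF g1" "valid_gen Lam LamF g2" "valid_gen Lam LamF k1" "valid_gen Lam LamF k2"
    and "op_bracket (gen_op Lam LamF g1) (gen_op Lam LamF g2) =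
         op_add (op_scale a (gen_op Lam LamF k1)) (op_scale c (gen_op Lam LamF k2))"
  shows "r g1 (r g2 u) - r g2 (r g1 u) = smul a (r k1 u) + smul c (r k2 u)"
proof -
  have "r g1 (r g2 u) - r g2 (r g1 u) = rho (op_bracket (gen_op Lam LamF g1) (gen_op Lam LamF g2)) u"
    using rep gen_in_alg assms(1,2) by (simp add: is_representation_def)
  also have "\<dots> = smul a (r k1 u) + smul c (r k2 u)"
    unfolding assms(5) using rep gen_in_alg assms(3,4) by (simp add: is_representation_def)
  finally show ?thesis .
qed

lemma rho_sum:
  assumes "finite A" "\<forall>g\<in>A. valid_gen Lam LamF g"
  shows "rho (\<lambda>t. \<Sum>g\<in>A. gen_op Lam LamF g t) u = (\<Sum>g\<in>A. r g u)"
  using assms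
proof (induction A rule: finite_induct)
  case empty
  have z: "(\<lambda>t::tvec. 0::tvec) \<in> open_string_algebra Lam LamF"
    using sum_in_alg[of "{}" Lam LamF] by simp
  have "(\<lambda>t::tvec. 0::tvec) = op_add (op_scale 0 (\<lambda>t. 0)) (op_scale 0 (\<lambda>t. 0))"
    by (simp add: op_add_def op_scale_def)
  then have "rho (\<lambda>t::tvec. 0::tvec) u = smul 0 (rho (\<lambda>t. 0) u) + smul 0 (rho (\<lambda>t. 0) u)"
    using rep z unfolding is_representation_def by metis
  then show ?case by simp
next
  case (insert g A)
  have m: "(\<lambda>t. \<Sum>g\<in>A. gen_op Lam LamF g t) \<in> open_string_algebra Lam LamF"
    using sum_in_alg insert by auto
  have e: "(\<lambda>t. \<Sum>g\<in>insert g A. gen_op Lam LamF g t) =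
     op_add (op_scale 1 (gen_op Lam LamF g)) (op_scale 1 (\<lambda>t. \<Sum>g\<in>A. gen_op Lam LamF g t))"
    using insert by (simp add: op_add_def op_scale_def)
  show ?case unfolding e using rep m gen_in_alg[of Lam LamF g] insert
    unfolding is_representation_def by simp
qed

lemma herm1: "B (smul a u + u') w = a * B u w + B u' w"
  using herm unfolding pos_def_hermitian_def by (elim conjE allE)
lemma herm2: "B u w = cnj (B w u)"
  using herm unfolding pos_def_hermitian_def by (elim conjE allE)
lemma herm3: "u \<noteq> 0 \<Longrightarrow> Re (B u u) > 0"
  using herm unfolding pos_def_hermitian_def by (elim conjE allE) (erule mp)

lemma B_zero: "B 0 w = 0"
proof -
  have "B (smul 1 0 + 0) w = 1 * B 0 w + B 0 w" by (rule herm1)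
  then show ?thesis by simp
qed

lemma B_scale1: "B (smul a u) w = a * B u w"
  using herm1[of a u 0 w] by (simp add: B_zero)

lemma B_scale2: "B u (smul a w) = cnj a * B u w"
  using herm2[of u "smul a w"] herm2[of w u] by (simp add: B_scale1)

lemma B_pos: "Re (B u u) \<ge> 0"
  using herm3[of u] by (cases "u = 0") (auto simp: B_zero)

lemma B_vpos: "Re (B v v) > 0"
  using herm3 vnz by blast

lemma pos_gap:
  assumes g: "valid_gen Lam LamF g" "in_Gminus g" and k: "valid_gen Lam LamF k1" "valid_gen Lam LamF k2"
    "in_G00 k1" "in_G00 k2"
    and br: "op_bracket (gen_op Lam LamF g) (gen_op Lam LamF (omega g)) =
         op_add (op_scale 1 (gen_op Lam LamF k1)) (op_scale (-1) (gen_op Lam LamF k2))"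
  shows "h k2 \<le> h k1"
proof -
  let ?c = "complex_of_real (h k1 - h k2)"
  have "r g (r (omega g) v) - r (omega g) (r g v) = smul 1 (r k1 v) + smul (-1) (r k2 v)"
    by (rule comm) (use g k br in auto)
  then have fe: "r g (r (omega g) v) = smul ?c v"
    using vminus[OF g] r_zero[of "omega g"] g vzero[OF k(1,3)] vzero[OF k(2,4)]
    by (simp add: vs.scale_left_diff_distrib[symmetric] vs.scale_minus_left)
  have "B (r (omega g) v) (r (omega g) v) = B v (r g (r (omega g) v))"
    using unit[of "omega g"] g by simp
  also have "\<dots> = ?c * B v v" unfolding fe B_scale2 by simp
  finally have "Re (B (r (omega g) v) (r (omega g) v)) = (h k1 - h k2) * Re (B v v)" by simp
  then have "(h k1 - h k2) * Re (B v v) \<ge> 0" using B_pos by metis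
  then show ?thesis using B_vpos by (simp add: zero_le_mult_iff)
qed

end



lemma nat_seq:
  fixes N :: "nat \<Rightarrow> real" and c :: real
  assumes N0: "N 0 > 0" and Np: "\<And>n. N n \<ge> 0" and NS: "\<And>n. N (Suc n) = real (Suc n) * (c - real n) * N n"
  shows "\<exists>k::nat. c = real k"
proof (rule ccontr)
  assume nk: "\<not> (\<exists>k::nat. c = real k)"
  define m where "m = nat \<lceil>c\<rceil>"
  have pos: "n \<le> m \<Longrightarrow> N n > 0" for n
  proof (induction n)
    case 0 then show ?case using N0 by simp
  next
    case (Suc n)
    then have "n < m" by simp
    then have "int n < \<lceil>c\<rceil>" unfolding m_def by linarith
    then have "real n < c" by (simp add: less_ceiling_iff)
    then show ?case using Suc NS[of n] by simp
  qed
  have "c \<le> real m" unfolding m_def by (metis le_nat_iff of_int_of_nat_eq of_nat_nat ceiling_le_iff order_refl nat_le_iff less_eq_real_def  ceiling_correct  of_int_ceiling_le_add_one le_of_int_ceiling int_ops(1) nat_0_le linorder_linear nat_eq_iff2 of_nat_0_le_iff order.trans)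
  moreover have "c \<noteq> real m" using nk by blast
  ultimately have "c - real m < 0" by simp
  then have "N (Suc m) < 0" using NS[of m] pos[of m] by (simp add: mult_pos_neg mult_neg_pos)
  then show False using Np[of "Suc m"] by simp
qed

context ulw begin

lemma smul_comb: "smul a x + (smul b x - smul c x) = smul (a + b - c) x"
  by (simp add: vs.scale_left_distrib vs.scale_left_diff_distrib add_diff_eq)

lemma sl2:
  assumes vg: "valid_gen Lam LamF (F a1 b1 I J a3 b3)" and len: "length I < length J"
  shows "\<exists>k::nat. h (F a1 a1 I I a3 a3) - h (F b1 b1 J J b3 b3) = real k"
proof -
  define g where "g = F a1 b1 I J a3 b3"
  define og where "og = F b1 a1 J I b3 a3"
  define px where "px = F a1 a1 I I a3 a3"
  define py where "py = F b1 b1 J J b3 b3"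
  have vs: "valid_gen Lam LamF g" "valid_gen Lam LamF og" "valid_gen Lam LamF px" "valid_gen Lam LamF py"
    using vg unfolding g_def og_def px_def py_def by auto
  have neq: "(a1,I,a3) \<noteq> (b1,J,b3)" using len by auto
  have gm: "in_Gminus g" unfolding g_def using len by simp
  have oo: "omega og = g" unfolding og_def g_def by simp
  have R1: "r g (r og u) = r og (r g u) + (r px u - r py u)" for u
  proof -
    have "r g (r og u) - r og (r g u) = smul 1 (r px u) + smul (-1) (r py u)"
      by (rule comm) (use vs F_I1[OF vg neq] in \<open>simp_all add: g_def og_def px_def py_def\<close>)
    then show ?thesis by (simp add: vs.scale_minus_left algebra_simps)
  qed
  have R2: "r px (r og u) = r og (r px u) - r og u" for u
  proof -
    have "r px (r og u) - r og (r px u) = smul (-1) (r og u) + smul 0 (r og u)"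
      by (rule comm) (use vs F_I2[OF vg neq] in \<open>simp_all add: g_def og_def px_def py_def\<close>)
    then show ?thesis by (simp add: vs.scale_minus_left algebra_simps)
  qed
  have R3: "r py (r og u) = r og (r py u) + r og u" for u
  proof -
    have "r py (r og u) - r og (r py u) = smul 1 (r og u) + smul 0 (r og u)"
      by (rule comm) (use vs F_I3[OF vg neq] in \<open>simp_all add: g_def og_def px_def py_def\<close>)
    then show ?thesis by (simp add: algebra_simps)
  qed
  define cx where "cx = h px"
  define cy where "cy = h py"
  define cr where "cr = cx - cy"
  have fv: "r g v = 0" using vminus[OF vs(1) gm] .
  have pxv: "r px v = smul (of_real cx) v" using vzero[OF vs(3)] unfolding cx_def px_def by simp
  have pyv: "r py v = smul (of_real cy) v" using vzero[OF vs(4)] unfolding cy_def py_def by simp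
  define w where "w n = (r og ^^ n) v" for n
  have wS: "w (Suc n) = r og (w n)" for n unfolding w_def by simp
  have A: "r px (w n) = smul (of_real (cx - real n)) (w n) \<and> r py (w n) = smul (of_real (cy + real n)) (w n)" for n
  proof (induction n)
    case 0 then show ?case using pxv pyv by (simp add: w_def)
  next
    case (Suc n)
    have "r px (w (Suc n)) = smul (of_real (cx - real n)) (w (Suc n)) - w (Suc n)"
      unfolding wS R2 using Suc r_scale[OF vs(2)] by simp
    also have "\<dots> = smul (of_real (cx - real (Suc n))) (w (Suc n))"
      by (simp add: vs.scale_left_diff_distrib algebra_simps)
    finally have 1: "r px (w (Suc n)) = smul (of_real (cx - real (Suc n))) (w (Suc n))" .
    have "r py (w (Suc n)) = smul (of_real (cy + real n)) (w (Suc n)) + w (Suc n)"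
      unfolding wS R3 using Suc r_scale[OF vs(2)] by simp
    also have "\<dots> = smul (of_real (cy + real (Suc n))) (w (Suc n))"
      by (simp add: vs.scale_left_distrib algebra_simps)
    finally show ?case using 1 by simp
  qed
  have Bw: "r g (w (Suc n)) = smul (of_real (real (Suc n) * (cr - real n))) (w n)" for n
  proof (induction n)
    case 0
    have "r g (w (Suc 0)) = smul (of_real cx) v - smul (of_real cy) v"
      unfolding wS R1 using fv r_zero[OF vs(2)] pxv pyv by (simp add: w_def)
    also have "\<dots> = smul (of_real (real (Suc 0) * (cr - real 0))) (w 0)"
      by (simp add: w_def cr_def vs.scale_left_diff_distrib)
    finally show ?case .
  next
    case (Suc n)
    have "r g (w (Suc (Suc n))) = smul (of_real (real (Suc n) * (cr - real n))) (w (Suc n))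
        + (smul (of_real (cx - real (Suc n))) (w (Suc n)) - smul (of_real (cy + real (Suc n))) (w (Suc n)))"
      unfolding wS[of "Suc n"] R1 unfolding wS[symmetric] using Suc A[of "Suc n"] r_scale[OF vs(2)] wS by simp
    also have "\<dots> = smul (of_real (real (Suc n) * (cr - real n)) + of_real (cx - real (Suc n)) - of_real (cy + real (Suc n))) (w (Suc n))"
      by (rule smul_comb)
    also have "of_real (real (Suc n) * (cr - real n)) + of_real (cx - real (Suc n)) - of_real (cy + real (Suc n))
       = (of_real (real (Suc (Suc n)) * (cr - real (Suc n))) :: complex)"
      unfolding cr_def by (simp add: algebra_simps)
    finally show ?case .
  qed
  define N where "N n = Re (B (w n) (w n))" for n
  have NS: "N (Suc n) = real (Suc n) * (cr - real n) * N n" for n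
  proof -
    have "B (w (Suc n)) (w (Suc n)) = B (w n) (r g (r og (w n)))"
      unfolding wS using unit[OF vs(2)] oo by simp
    also have "\<dots> = of_real (real (Suc n) * (cr - real n)) * B (w n) (w n)"
      unfolding wS[symmetric] Bw B_scale2 by simp
    finally show ?thesis unfolding N_def by simp
  qed
  have "\<exists>k::nat. cr = real k"
    by (rule nat_seq[of N]) (use B_vpos B_pos NS in \<open>auto simp: N_def w_def\<close>)
  then show ?thesis unfolding cr_def cx_def cy_def px_def py_def .
qed

end



definition FA :: "nat \<Rightarrow> nat \<Rightarrow> nat \<Rightarrow> nat list \<Rightarrow> gen set" where
  "FA Lam LamF l I = (\<lambda>\<mu>. F l l I I \<mu> \<mu>) ` {1..LamF}"
definition LA :: "nat \<Rightarrow> nat \<Rightarrow> nat \<Rightarrow> nat list \<Rightarrow> gen set" where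
  "LA Lam LamF l I = (\<lambda>i. L l l (I@[i]) (I@[i])) ` {1..Lam}"

lemma sum_split_A:
  "(\<Sum>g\<in>FA Lam LamF l I \<union> LA Lam LamF l I. \<phi> g) =
   (\<Sum>\<mu>\<in>{1..LamF}. \<phi> (F l l I I \<mu> \<mu>)) + (\<Sum>i\<in>{1..Lam}. \<phi> (L l l (I@[i]) (I@[i])))"
proof -
  have d: "FA Lam LamF l I \<inter> LA Lam LamF l I = {}" unfolding FA_def LA_def by auto
  have i1: "inj_on (\<lambda>\<mu>. F l l I I \<mu> \<mu>) {1..LamF}" by (auto simp: inj_on_def)
  have i2: "inj_on (\<lambda>i. L l l (I@[i]) (I@[i])) {1..Lam}" by (auto simp: inj_on_def)
  have "(\<Sum>g\<in>FA Lam LamF l I \<union> LA Lam LamF l I. \<phi> g) = sum \<phi> (FA Lam LamF l I) + sum \<phi> (LA Lam LamF l I)"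
    by (rule sum.union_disjoint) (use d in \<open>auto simp: FA_def LA_def\<close>)
  then show ?thesis unfolding FA_def LA_def sum.reindex[OF i1] sum.reindex[OF i2] by simp
qed

context ulw begin

definition p where "p l1 I l2 = h (F l1 l1 I I l2 l2)"
definition a where "a l I = h (L l l I I)"

lemma Lmono:
  assumes "l \<in> {1..LamF}" "valid_seq Lam I" "i \<in> {1..Lam}"
  shows "a l (I@[i]) \<le> a l I"
  unfolding a_def
proof (rule pos_gap[of "L l l I (I@[i])"])
  have vi: "valid_seq Lam (I@[i])" using assms by (auto simp: valid_seq_def)
  show "valid_gen Lam LamF (L l l I (I @ [i]))" "valid_gen Lam LamF (L l l I I)"
    "valid_gen Lam LamF (L l l (I@[i]) (I@[i]))" using assms vi by auto
  show "in_Gminus (L l l I (I @ [i]))" by simp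
  show "in_G00 (L l l I I)" "in_G00 (L l l (I@[i]) (I@[i]))" by simp_all
  show "op_bracket (gen_op Lam LamF (L l l I (I @ [i]))) (gen_op Lam LamF (omega (L l l I (I @ [i])))) =
    op_add (op_scale 1 (gen_op Lam LamF (L l l I I))) (op_scale (- 1) (gen_op Lam LamF (L l l (I @ [i]) (I @ [i]))))"
    using L_I4[OF assms] by simp
qed

lemma a_le_nil:
  assumes "l \<in> {1..LamF}" "valid_seq Lam I"
  shows "a l I \<le> a l []"
  using assms(2)
proof (induction I rule: rev_induct)
  case Nil then show ?case by simp
next
  case (snoc x xs)
  have "valid_seq Lam xs" "x \<in> {1..Lam}" using snoc.prems by (auto simp: valid_seq_def)
  then show ?case using Lmono[OF assms(1)] snoc.IH by (meson order_trans)
qed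

lemma rel:
  assumes l: "l \<in> {1..LamF}" and I: "valid_seq Lam I"
  shows "a l I = (\<Sum>\<mu>\<in>{1..LamF}. p l I \<mu>) + (\<Sum>i\<in>{1..Lam}. a l (I@[i]))"
proof -
  let ?A = "FA Lam LamF l I \<union> LA Lam LamF l I"
  have fin: "finite ?A" unfolding FA_def LA_def by simp
  have vA: "\<forall>g\<in>?A. valid_gen Lam LamF g" using l I unfolding FA_def LA_def by (auto simp: valid_seq_def)
  have g00: "\<forall>g\<in>?A. in_G00 g" unfolding FA_def LA_def by auto
  have opeq: "gen_op Lam LamF (L l l I I) = (\<lambda>t. \<Sum>g\<in>?A. gen_op Lam LamF g t)"
  proof
    fix t
    show "gen_op Lam LamF (L l l I I) t = (\<Sum>g\<in>?A. gen_op Lam LamF g t)"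
      apply (simp only: gen_op_ext ext_sumf[OF fin])
      apply (simp only: sum_split_A)
      apply (rule arg_cong[where f = "\<lambda>\<phi>. extl \<phi> t"])
      apply (rule ext)
      apply (rule L_rel_act[OF l I])
      done
  qed
  have "smul (of_real (h (L l l I I))) v = r (L l l I I) v"
    using vzero[of "L l l I I"] l I by simp
  also have "\<dots> = (\<Sum>g\<in>?A. r g v)" unfolding opeq by (rule rho_sum[OF fin vA])
  also have "\<dots> = (\<Sum>g\<in>?A. smul (of_real (h g)) v)" using vA g00 vzero by (intro sum.cong) auto
  also have "\<dots> = smul (of_real (\<Sum>g\<in>?A. h g)) v" by (simp add: vs.scale_sum_left)
  finally have "h (L l l I I) = (\<Sum>g\<in>?A. h g)" using vnz by (simp del: of_real_sum add: of_real_sum[symmetric])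
  then show ?thesis unfolding sum_split_A a_def p_def .
qed

lemma lower:
  assumes l: "l \<in> {1..LamF}" and I: "valid_seq Lam I" and Lp: "Lam > 0" and LFp: "LamF > 0"
  shows "\<exists>\<mu>\<in>{1..LamF}. p l I \<mu> \<ge> (1 - real Lam) * a l [] / real LamF"
proof (rule ccontr)
  let ?C = "(1 - real Lam) * a l []"
  assume "\<not> ?thesis"
  then have lt: "\<forall>\<mu>\<in>{1..LamF}. p l I \<mu> < ?C / real LamF" by auto
  have "(\<Sum>\<mu>\<in>{1..LamF}. p l I \<mu>) < (\<Sum>\<mu>\<in>{1..LamF}. ?C / real LamF)"
    by (rule sum_strict_mono) (use lt LFp in auto)
  also have "\<dots> = ?C" using LFp by simp
  finally have s: "(\<Sum>\<mu>\<in>{1..LamF}. p l I \<mu>) < ?C" .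
  have "(\<Sum>i\<in>{1..Lam}. a l (I@[i])) \<le> real (card {1..Lam}) * a l I"
    by (rule sum_bounded_above) (use Lmono[OF l I] in auto)
  then have s2: "(\<Sum>i\<in>{1..Lam}. a l (I@[i])) \<le> real Lam * a l I" by simp
  have "(1 - real Lam) * a l [] \<le> (1 - real Lam) * a l I"
    using a_le_nil[OF l I] Lp by (intro mult_left_mono_neg) auto
  then show False using rel[OF l I] s s2 by (simp add: algebra_simps)
qed

lemma final:
  assumes Lp: "Lam > 0" and LFp: "LamF > 0"
  shows "\<exists>(\<alpha>::real) (N::nat). \<forall>l1 l2 I.
           l1 \<in> {1..LamF} \<and> l2 \<in> {1..LamF} \<and> valid_seq Lam I \<and> length I \<ge> N
           \<longrightarrow> h (F l1 l1 I I l2 l2) = \<alpha>"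
proof -
  define C where "C = (1 - real Lam) * a 1 [] / real LamF"
  have one: "(1::nat) \<in> {1..LamF}" "(1::nat) \<in> {1..Lam}" using Lp LFp by auto
  have sl: "\<exists>k::nat. p a1 I a3 - p b1 J b3 = real k"
    if "a1 \<in> {1..LamF}" "a3 \<in> {1..LamF}" "b1 \<in> {1..LamF}" "b3 \<in> {1..LamF}"
       "valid_seq Lam I" "valid_seq Lam J" "length I < length J" for a1 a3 b1 b3 I J
    unfolding p_def by (rule sl2) (use that in auto)
  have LB: "p l1 I l2 \<ge> C" if H: "l1 \<in> {1..LamF}" "l2 \<in> {1..LamF}" "valid_seq Lam I" for l1 l2 I
  proof -
    let ?I = "replicate (Suc (length I)) (1::nat)"
    have vI: "valid_seq Lam ?I" using one by (auto simp: valid_seq_def)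
    obtain \<mu> where \<mu>: "\<mu> \<in> {1..LamF}" "p 1 ?I \<mu> \<ge> C"
      using lower[OF one(1) vI Lp LFp] unfolding C_def by blast
    obtain k where "p l1 I l2 - p 1 ?I \<mu> = real k" using sl[OF H(1,2) one(1) \<mu>(1) H(3) vI] by auto
    then show ?thesis using \<mu> by simp
  qed
  define p0 where "p0 = p 1 [1] 1"
  have v1: "valid_seq Lam [1]" "valid_seq Lam [1,1]" using one by (auto simp: valid_seq_def)
  define D where "D = {k::nat. \<exists>l1 I l2. l1 \<in> {1..LamF} \<and> l2 \<in> {1..LamF} \<and> valid_seq Lam I \<and>
     length I \<ge> 2 \<and> p0 - p l1 I l2 = real k}"
  have Db: "k \<le> nat \<lceil>p0 - C\<rceil>" if kD: "k \<in> D" for k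
  proof -
    obtain l1 I l2 where "l1 \<in> {1..LamF}" "l2 \<in> {1..LamF}" "valid_seq Lam I" "p0 - p l1 I l2 = real k"
      using kD unfolding D_def by blast
    then have "real k \<le> p0 - C" using LB by fastforce
    then show ?thesis by linarith
  qed
  have finD: "finite D" using Db by (meson finite_nat_set_iff_bounded_le)
  obtain k0 where "p0 - p 1 [1,1] 1 = real k0"
    using sl[OF one(1) one(1) one(1) one(1) v1(1) v1(2)] unfolding p0_def by auto
  then have "k0 \<in> D" unfolding D_def using one v1 by fastforce
  then have neD: "D \<noteq> {}" by blast
  define d where "d = Max D"
  have "d \<in> D" unfolding d_def using finD neD by simp
  then obtain m1 M m2 where m: "m1 \<in> {1..LamF}" "m2 \<in> {1..LamF}" "valid_seq Lam M" "length M \<ge> 2"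
     "p0 - p m1 M m2 = real d" unfolding D_def by blast
  show ?thesis
  proof (intro exI allI impI)
    fix l1 l2 I
    assume x: "l1 \<in> {1..LamF} \<and> l2 \<in> {1..LamF} \<and> valid_seq Lam I \<and> Suc (length M) \<le> length I"
    obtain k1 where k1: "p m1 M m2 - p l1 I l2 = real k1" using sl[OF m(1,2)] x m(3) by force
    have "length [1::nat] < length I" using x m(4) by simp
    then obtain k2 where k2: "p0 - p l1 I l2 = real k2" using sl[OF one(1) one(1)] x v1(1) unfolding p0_def by force
    have "k2 \<in> D" unfolding D_def using x m(4) k2 by force
    then have "k2 \<le> d" unfolding d_def using finD by simp
    then show "h (F l1 l1 I I l2 l2) = p m1 M m2" using k1 k2 m(5) unfolding p_def[symmetric] by linarith
  qed
qed

end

theorem lemma21: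
  fixes Lam LamF :: nat
    and smul :: "complex \<Rightarrow> 'v::ab_group_add \<Rightarrow> 'v"
    and rho :: "top \<Rightarrow> 'v \<Rightarrow> 'v"
    and B :: "'v \<Rightarrow> 'v \<Rightarrow> complex"
    and h :: "gen \<Rightarrow> real"
  assumes "Lam > 0" and "LamF > 0"
    and "unitary_lowest_weight_rep Lam LamF smul rho B h"
  shows "\<exists>(\<alpha>::real) (N::nat). \<forall>l1 l2 I.
           l1 \<in> {1..LamF} \<and> l2 \<in> {1..LamF} \<and> valid_seq Lam I \<and> length I \<ge> N
           \<longrightarrow> h (F l1 l1 I I l2 l2) = \<alpha>"
proof -
  have A: "is_representation Lam LamF smul rho \<and>
     (\<exists>v. v \<noteq> 0 \<and>
        (\<forall>S. module.subspace smul S \<and> v \<in> S \<and>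
             (\<forall>X\<in>open_string_algebra Lam LamF. \<forall>u\<in>S. rho X u \<in> S) \<longrightarrow> S = UNIV) \<and>
        (\<forall>g. valid_gen Lam LamF g \<and> in_Gminus g \<longrightarrow> rho (gen_op Lam LamF g) v = 0) \<and>
        (\<forall>g. valid_gen Lam LamF g \<and> in_G00 g \<longrightarrow>
              rho (gen_op Lam LamF g) v = smul (complex_of_real (h g)) v)) \<and>
     pos_def_hermitian smul B \<and>
     (\<forall>g u w. valid_gen Lam LamF g \<longrightarrow>
        B (rho (gen_op Lam LamF g) u) w = B u (rho (gen_op Lam LamF (omega g)) w))"
    using assms(3) unfolding unitary_lowest_weight_rep_def .
  note rep = conjunct1[OF A]
  note ex = conjunct1[OF conjunct2[OF A]]
  note hm = conjunct1[OF conjunct2[OF conjunct2[OF A]]]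
  note un = conjunct2[OF conjunct2[OF conjunct2[OF A]]]
  from ex obtain v where vnz: "v \<noteq> 0"
    and vm: "\<forall>g. valid_gen Lam LamF g \<and> in_Gminus g \<longrightarrow> rho (gen_op Lam LamF g) v = 0"
    and vz: "\<forall>g. valid_gen Lam LamF g \<and> in_G00 g \<longrightarrow>
              rho (gen_op Lam LamF g) v = smul (complex_of_real (h g)) v"
    by (elim exE conjE) 
  have U: "ulw Lam LamF smul rho B h v"
  proof
    show "is_representation Lam LamF smul rho" by (rule rep)
    show "v \<noteq> 0" by (rule vnz)
    show "pos_def_hermitian smul B" by (rule hm)
    show "\<And>g. valid_gen Lam LamF g \<Longrightarrow> in_Gminus g \<Longrightarrow> rho (gen_op Lam LamF g) v = 0"
      using vm by blast
    show "\<And>g. valid_gen Lam LamF g \<Longrightarrow> in_G00 g \<Longrightarrow> rho (gen_op Lam LamF g) v = smul (complex_of_real (h g)) v"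
      using vz by blast
    show "\<And>g u w. valid_gen Lam LamF g \<Longrightarrow> B (rho (gen_op Lam LamF g) u) w = B u (rho (gen_op Lam LamF (omega g)) w)"
      using un by blast
  qed
  show ?thesis by (rule ulw.final[OF U]) (use assms in auto)
qed

end
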